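(* Let $\Gamma$ be a gain operator on $\ell^\infty_+(\mathcal I)$ satisfying the $\oplus$-MBI property, and define $\sigma_*:\mathbb R_+\to\ell^\infty_+(\mathcal I)$ by $\sigma_*(r):=\bigoplus_{n=0}^\infty\hat\Gamma^n(r\mathbf 1)$ (the minimal fixed point of $\Gamma^\oplus_{r\mathbf 1}$). Then: (a) if $\sigma_*(r)$ is the only fixed point of $\Gamma^\oplus_{r\mathbf 1}$ for each $r\ge0$, then every component function $\sigma_{*i}$, $i\in\mathcal I$, is continuous; in particular $\sigma_*$ is sequentially continuous in the weak$^*$-topology; (b) if $\sigma_*(r)$ is a globally attractive fixed point of $\Gamma^\oplus_{r\mathbf 1}$ for each $r\ge0$ (i.e. $\|(\Gamma^\oplus_{r\mathbf 1})^n(s)-\sigma_*(r)\|\to0$ for every $s\in\ell^\infty_+(\mathcal I)$), then $\sigma_*$ is norm-continuous.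
   Context: Let $\mathcal I$ be a nonempty countable index set; $\ell^\infty_+(\mathcal I)$ is the cone of nonnegative real families $s=(s_i)_{i\in\mathcal I}$ with $\|s\|:=\sup_i|s_i|<\infty$, ordered componentwise; $\mathbf 1$ is the all-ones vector; $\oplus$ is the componentwise maximum, $\bigoplus$ the componentwise supremum of a bounded family. A sequence in $\ell^\infty(\mathcal I)$ converges weak$^*$ (viewing $\ell^\infty=(\ell^1)^*$) iff it is norm-bounded and converges componentwise. $\mathcal K_\infty$: continuous strictly increasing unbounded $\gamma:\mathbb R_+\to\mathbb R_+$ with $\gamma(0)=0$. For $\mathcal J\subset\mathcal I$, $s_{|\mathcal J}$ agrees with $s$ on $\mathcal J$ and is $0$ elsewhere. Gain operator: for each $i$ a finite (possibly empty) $\mathcal I_i\subset\mathcal I\setminus\{i\}$; directed graph $\mathcal G$ with vertices $\mathcal I$ and edges $ji$, $j\in\mathcal I_i$; a pointwise equicontinuous family $\gamma_{ij}\in\mathcal K_\infty$ ($ji\in E(\mathcal G)$); functions $\mu_i:\ell^\infty_+(\mathcal I)\to[0,\infty]$ with (M1) some $\xi\in\mathcal K_\infty$ has $\mu_i(0)=0$, $\mu_i(s)\ge\xi(\|s\|)$; (M2) $\mu_i$ monotone; (M3) for each finite $\mathcal J$, $\mu_i$ restricted to vectors vanishing off $\mathcal J$ is finite-valued and continuous; (M4) for each norm-bounded $A$ and $\varepsilon>0$ there is $\delta>0$ with $\sup_i|\mu_i(s_{|\mathcal I_i})-\mu_i(s^0_{|\mathcal I_i})|\le\varepsilon$ whenever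 $s^0\in A$, $\|s-s^0\|\le\delta$. $\Gamma_i(s):=\mu_i([\gamma_{ij}(s_j)]_{j\in\mathcal I_i})$ (argument zero outside $\mathcal I_i$). $\hat\Gamma(s):=s\oplus\Gamma(s)$ and $\Gamma^\oplus_b(s):=b\oplus\Gamma(s)$. $\oplus$-MBI property: there is $\varphi\in\mathcal K_\infty$ such that for all $s,b$, $s\le b\oplus\Gamma(s)$ implies $\|s\|\le\varphi(\|b\|)$. *)

theory Defs
  imports Complex_Main "HOL-Library.Countable" "HOL-Library.Extended_Real"
begin

definition linf_pos :: "('i \<Rightarrow> real) set" where
  "linf_pos = {s. (\<forall>i. 0 \<le> s i) \<and> bdd_above (range (\<lambda>i. \<bar>s i\<bar>))}"

definition linf_norm :: "('i \<Rightarrow> real) \<Rightarrow> real" where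
  "linf_norm s = (SUP i. \<bar>s i\<bar>)"

definition restr :: "'i set \<Rightarrow> ('i \<Rightarrow> real) \<Rightarrow> ('i \<Rightarrow> real)" where
  "restr J s = (\<lambda>j. if j \<in> J then s j else 0)"

definition Kinf :: "(real \<Rightarrow> real) \<Rightarrow> bool" where
  "Kinf g \<longleftrightarrow> g 0 = 0 \<and> continuous_on {0..} g \<and> strict_mono_on {0..} g
     \<and> (\<forall>M. \<exists>r\<ge>0. g r > M)"

text \<open>Gain operator component: Gamma_i(s) = mu_i([gamma_ij(s_j)]_{j in I_i}).
  The value of mu is in [0,infinity]; on these finitely supported arguments it is finite
  by (M3), so we take the real part.\<close>
definition Gam :: "('i \<Rightarrow> 'i set) \<Rightarrow> ('i \<Rightarrow> 'i \<Rightarrow> real \<Rightarrow> real) \<Rightarrow> ('i \<Rightarrow> ('i \<Rightarrow> real) \<Rightarrow> ereal)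
    \<Rightarrow> ('i \<Rightarrow> real) \<Rightarrow> ('i \<Rightarrow> real)" where
  "Gam II gam mu s = (\<lambda>i. real_of_ereal (mu i (\<lambda>j. if j \<in> II i then gam i j (s j) else 0)))"

definition gain_operator ::
  "('i \<Rightarrow> 'i set) \<Rightarrow> ('i \<Rightarrow> 'i \<Rightarrow> real \<Rightarrow> real) \<Rightarrow> ('i \<Rightarrow> ('i \<Rightarrow> real) \<Rightarrow> ereal) \<Rightarrow> bool" where
  "gain_operator II gam mu \<longleftrightarrow>
     (\<forall>i. finite (II i) \<and> i \<notin> II i)
   \<and> (\<forall>i j. j \<in> II i \<longrightarrow> Kinf (gam i j))
   \<and> (\<forall>r\<ge>0. \<forall>e>0. \<exists>d>0. \<forall>i j r'. j \<in> II i \<longrightarrow> r' \<ge> 0 \<longrightarrow> \<bar>r' - r\<bar> < d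
          \<longrightarrow> \<bar>gam i j r' - gam i j r\<bar> < e)
   \<comment> \<open>(M1)\<close>
   \<and> (\<exists>xi. Kinf xi \<and> (\<forall>i. mu i (\<lambda>_. 0) = 0 \<and> (\<forall>s\<in>linf_pos. mu i s \<ge> ereal (xi (linf_norm s)))))
   \<comment> \<open>(M2)\<close>
   \<and> (\<forall>i. \<forall>s\<in>linf_pos. \<forall>t\<in>linf_pos. (\<forall>j. s j \<le> t j) \<longrightarrow> mu i s \<le> mu i t)
   \<comment> \<open>(M3)\<close>
   \<and> (\<forall>i J. finite J \<longrightarrow>
        (\<forall>s\<in>linf_pos. (\<forall>j. j \<notin> J \<longrightarrow> s j = 0) \<longrightarrow> mu i s \<noteq> \<infinity>)
      \<and> (\<forall>s\<in>linf_pos. (\<forall>j. j \<notin> J \<longrightarrow> s j = 0) \<longrightarrow> (\<forall>e>0. \<exists>d>0. \<forall>t\<in>linf_pos.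
            (\<forall>j. j \<notin> J \<longrightarrow> t j = 0) \<longrightarrow> linf_norm (\<lambda>j. t j - s j) < d \<longrightarrow>
            \<bar>real_of_ereal (mu i t) - real_of_ereal (mu i s)\<bar> < e)))
   \<comment> \<open>(M4)\<close>
   \<and> (\<forall>A. A \<subseteq> linf_pos \<longrightarrow> (\<exists>C. \<forall>s\<in>A. linf_norm s \<le> C) \<longrightarrow>
        (\<forall>e>0. \<exists>d>0. \<forall>s0\<in>A. \<forall>s\<in>linf_pos. linf_norm (\<lambda>j. s j - s0 j) \<le> d \<longrightarrow>
           (\<forall>i. \<bar>real_of_ereal (mu i (restr (II i) s)) - real_of_ereal (mu i (restr (II i) s0))\<bar> \<le> e)))"

definition Ghat where
  "Ghat II gam mu s = (\<lambda>i. max (s i) (Gam II gam mu s i))"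

definition Gplus where
  "Gplus II gam mu b s = (\<lambda>i. max (b i) (Gam II gam mu s i))"

definition MBI_oplus where
  "MBI_oplus II gam mu \<longleftrightarrow> (\<exists>phi. Kinf phi \<and>
     (\<forall>s\<in>linf_pos. \<forall>b\<in>linf_pos. (\<forall>i. s i \<le> max (b i) (Gam II gam mu s i))
        \<longrightarrow> linf_norm s \<le> phi (linf_norm b)))"

definition sigma_star where
  "sigma_star II gam mu r = (\<lambda>i. SUP n. ((Ghat II gam mu) ^^ n) (\<lambda>_. r) i)"

end

theory Submission imports Defs "HOL-Analysis.Analysis"
begin

lemma linf_pos_nonneg: "s \<in> linf_pos \<Longrightarrow> 0 \<le> s i"
  by (simp add: linf_pos_def)

lemma linf_norm_ge: "bdd_above (range (\<lambda>i. \<bar>s i\<bar>)) \<Longrightarrow> \<bar>s i\<bar> \<le> linf_norm s"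
  unfolding linf_norm_def by (rule cSUP_upper) auto

lemma linf_norm_le: "(\<And>i. \<bar>s i\<bar> \<le> C) \<Longrightarrow> linf_norm s \<le> C"
  unfolding linf_norm_def by (rule cSUP_least) auto

lemma linf_pos_ge: "s \<in> linf_pos \<Longrightarrow> s i \<le> linf_norm s"
  using linf_norm_ge[of s i] by (auto simp: linf_pos_def)

lemma linf_posI: "(\<And>i. 0 \<le> s i) \<Longrightarrow> (\<And>i. s i \<le> C) \<Longrightarrow> s \<in> linf_pos"
  unfolding linf_pos_def by (auto intro!: bdd_aboveI[where M=C])

lemma linf_norm_const: "0 \<le> r \<Longrightarrow> linf_norm (\<lambda>_. r) = r"
  unfolding linf_norm_def by simp

lemma linf_norm_diff: assumes "s \<in> linf_pos" "t \<in> linf_pos"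
  shows "\<bar>s i - t i\<bar> \<le> linf_norm (\<lambda>i. s i - t i)"
proof (rule linf_norm_ge)
  have "bdd_above (range (\<lambda>i. \<bar>s i\<bar>))" using assms(1) unfolding linf_pos_def mem_Collect_eq by (elim conjE)
  then obtain A where A: "\<And>i. \<bar>s i\<bar> \<le> A" by (meson bdd_above.E rangeI)
  have "bdd_above (range (\<lambda>i. \<bar>t i\<bar>))" using assms(2) unfolding linf_pos_def mem_Collect_eq by (elim conjE)
  then obtain B where B: "\<And>i. \<bar>t i\<bar> \<le> B" by (meson bdd_above.E rangeI)
  show "bdd_above (range (\<lambda>i. \<bar>s i - t i\<bar>))"
    by (rule bdd_aboveI[where M="A+B"]) (use A B in \<open>force intro: order.trans[OF abs_triangle_ineq4] add_mono\<close>)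
qed

lemma linf_pos_bnd: "s \<in> linf_pos \<Longrightarrow> \<exists>R. \<forall>j. 0 \<le> s j \<and> s j \<le> R"
  unfolding linf_pos_def bdd_above_def by force

lemma Kinf_nonneg: "Kinf g \<Longrightarrow> 0 \<le> x \<Longrightarrow> 0 \<le> g x"
  unfolding Kinf_def by (metis atLeast_iff order.refl order_le_less strict_mono_onD)

lemma Kinf_mono: "Kinf g \<Longrightarrow> 0 \<le> x \<Longrightarrow> x \<le> y \<Longrightarrow> g x \<le> g y"
  unfolding Kinf_def by (metis atLeast_iff order_le_less strict_mono_onD order_trans)

lemma chain_bound:
  fixes f :: "real \<Rightarrow> real"
  assumes f0: "f 0 = 0" and d: "d > 0"
    and step: "\<And>x y. 0 \<le> x \<Longrightarrow> x \<le> y \<Longrightarrow> y \<le> R \<Longrightarrow> y - x \<le> d \<Longrightarrow> \<bar>f y - f x\<bar> \<le> 1"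
  shows "\<forall>x. 0 \<le> x \<longrightarrow> x \<le> R \<longrightarrow> \<bar>f x\<bar> \<le> R / d + 1"
proof -
  have *: "\<forall>x. 0 \<le> x \<longrightarrow> x \<le> R \<longrightarrow> x \<le> real n * d \<longrightarrow> \<bar>f x\<bar> \<le> real n" for n
  proof (induction n)
    case 0 then show ?case using f0 by auto
  next
    case (Suc n)
    show ?case
    proof (intro allI impI)
      fix x assume x: "0 \<le> x" "x \<le> R" "x \<le> real (Suc n) * d"
      show "\<bar>f x\<bar> \<le> real (Suc n)"
      proof (cases "x \<le> real n * d")
        case True then show ?thesis using Suc x by force
      next
        case False
        have a: "0 \<le> real n * d" using d by simp
        have "\<bar>f x - f (real n * d)\<bar> \<le> 1" using False x a by (intro step) (auto simp: algebra_simps)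
        moreover have "\<bar>f (real n * d)\<bar> \<le> real n" using Suc a False x by auto
        ultimately show ?thesis by simp
      qed
    qed
  qed
  show ?thesis
  proof (intro allI impI)
    fix x assume x: "0 \<le> x" "x \<le> R"
    define n where "n = nat (ceiling (R / d))"
    have Rd: "0 \<le> R / d" using x d by simp
    have n1: "R / d \<le> real n" unfolding n_def using Rd by linarith
    have n2: "real n \<le> R / d + 1" unfolding n_def using Rd by linarith
    have "R \<le> real n * d" using n1 d by (simp add: field_simps)
    then show "\<bar>f x\<bar> \<le> R / d + 1" using *[of n] x n2 by force
  qed
qed

locale GO =
  fixes II :: "'i \<Rightarrow> 'i set" and gam :: "'i \<Rightarrow> 'i \<Rightarrow> real \<Rightarrow> real"
    and mu :: "'i \<Rightarrow> ('i \<Rightarrow> real) \<Rightarrow> ereal"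
  assumes go: "gain_operator II gam mu" and mbi: "MBI_oplus II gam mu"
begin

abbreviation G where "G \<equiv> Gam II gam mu"
abbreviation T where "T r \<equiv> Gplus II gam mu (\<lambda>_. r)"
abbreviation sig where "sig \<equiv> sigma_star II gam mu"

definition W where "W i s = (\<lambda>j. if j \<in> II i then gam i j (s j) else 0)"
definition bnd :: "real \<Rightarrow> ('i \<Rightarrow> real) \<Rightarrow> bool" where
  "bnd R s \<longleftrightarrow> (\<forall>j. 0 \<le> s j \<and> s j \<le> R)"

lemmas goD = go[unfolded gain_operator_def]
lemma c1: "\<forall>i. finite (II i) \<and> i \<notin> II i" using goD by (rule conjunct1)
lemma c2: "\<forall>i j. j \<in> II i \<longrightarrow> Kinf (gam i j)" using goD[THEN conjunct2] by (rule conjunct1)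
lemmas c3 = goD[THEN conjunct2, THEN conjunct2, THEN conjunct1]
lemmas c4 = goD[THEN conjunct2, THEN conjunct2, THEN conjunct2, THEN conjunct1]
lemmas c5 = goD[THEN conjunct2, THEN conjunct2, THEN conjunct2, THEN conjunct2, THEN conjunct1]
lemmas c6 = goD[THEN conjunct2, THEN conjunct2, THEN conjunct2, THEN conjunct2, THEN conjunct2, THEN conjunct1]
lemmas c7 = goD[THEN conjunct2, THEN conjunct2, THEN conjunct2, THEN conjunct2, THEN conjunct2, THEN conjunct2]

lemma fin: "finite (II i)" using c1 by blast

lemma gamK: "j \<in> II i \<Longrightarrow> Kinf (gam i j)" using c2 by blast

lemma equi: "0 \<le> r \<Longrightarrow> e > 0 \<Longrightarrow> \<exists>d>0. \<forall>i j r'. j \<in> II i \<longrightarrow> r' \<ge> 0 \<longrightarrow> \<bar>r' - r\<bar> < d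
          \<longrightarrow> \<bar>gam i j r' - gam i j r\<bar> < e"
  using c3 by blast

lemma M1: obtains xi where "Kinf xi" "\<And>i. mu i (\<lambda>_. 0) = 0" "\<And>i s. s \<in> linf_pos \<Longrightarrow> mu i s \<ge> ereal (xi (linf_norm s))"
  using c4 by blast

lemma M2: "s \<in> linf_pos \<Longrightarrow> t \<in> linf_pos \<Longrightarrow> (\<And>j. s j \<le> t j) \<Longrightarrow> mu i s \<le> mu i t"
  using c5 by blast

lemma M3: "finite J \<Longrightarrow> s \<in> linf_pos \<Longrightarrow> (\<And>j. j \<notin> J \<Longrightarrow> s j = 0) \<Longrightarrow> mu i s \<noteq> \<infinity>"
  using c6 by blast

lemma M4: "A \<subseteq> linf_pos \<Longrightarrow> \<forall>s\<in>A. linf_norm s \<le> C \<Longrightarrow> e > 0 \<Longrightarrow>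
        (\<exists>d>0. \<forall>s0\<in>A. \<forall>s\<in>linf_pos. linf_norm (\<lambda>j. s j - s0 j) \<le> d \<longrightarrow>
           (\<forall>i. \<bar>real_of_ereal (mu i (restr (II i) s)) - real_of_ereal (mu i (restr (II i) s0))\<bar> \<le> e))"
  using c7 by blast

lemma mu_nonneg: "s \<in> linf_pos \<Longrightarrow> 0 \<le> mu i s"
proof -
  assume s: "s \<in> linf_pos"
  obtain xi where "Kinf xi" "\<And>i s. s \<in> linf_pos \<Longrightarrow> mu i s \<ge> ereal (xi (linf_norm s))"
    using M1 by metis
  moreover have "0 \<le> linf_norm s" using linf_pos_ge[OF s] linf_pos_nonneg[OF s] by (meson order_trans)
  ultimately show ?thesis using s Kinf_nonneg by (meson ereal_less_eq(5) order_trans)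
qed

lemma gam_unif:
  assumes e: "e > 0"
  shows "\<exists>d>0. \<forall>i j x y. j \<in> II i \<longrightarrow> 0 \<le> x \<longrightarrow> 0 \<le> y \<longrightarrow> x \<le> R \<longrightarrow> y \<le> R \<longrightarrow> \<bar>x - y\<bar> < d
     \<longrightarrow> \<bar>gam i j x - gam i j y\<bar> < e"
proof -
  have "\<forall>r. \<exists>d. 0 \<le> r \<longrightarrow> d > 0 \<and> (\<forall>i j r'. j \<in> II i \<longrightarrow> r' \<ge> 0 \<longrightarrow> \<bar>r' - r\<bar> < d
          \<longrightarrow> \<bar>gam i j r' - gam i j r\<bar> < e/2)"
    using equi e by (metis half_gt_zero)
  then obtain D where D: "\<And>r. 0 \<le> r \<Longrightarrow> D r > 0"
    "\<And>r i j r'. 0 \<le> r \<Longrightarrow> j \<in> II i \<Longrightarrow> r' \<ge> 0 \<Longrightarrow> \<bar>r' - r\<bar> < D r \<Longrightarrow> \<bar>gam i j r' - gam i j r\<bar> < e/2"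
    by metis
  have cov: "{0..R} \<subseteq> \<Union>((\<lambda>r. ball r (D r)) ` {0..R})"
    using D(1) by force
  obtain eps where eps: "0 < eps" "\<And>x. x \<in> {0..R} \<Longrightarrow> \<exists>G \<in> (\<lambda>r. ball r (D r)) ` {0..R}. ball x eps \<subseteq> G"
    using Heine_Borel_lemma[OF compact_Icc cov] by blast
  show ?thesis
  proof (intro exI[of _ eps] conjI allI impI)
    fix i j x y assume h: "j \<in> II i" "0 \<le> x" "0 \<le> y" "x \<le> R" "y \<le> R" "\<bar>x - y\<bar> < eps"
    obtain r where r: "r \<in> {0..R}" "ball x eps \<subseteq> ball r (D r)" using eps(2)[of x] h by auto
    have "x \<in> ball x eps" using eps(1) by simp
    moreover have "y \<in> ball x eps" using h(6) by (simp add: dist_real_def)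
    ultimately have "x \<in> ball r (D r)" "y \<in> ball r (D r)" using r(2) by blast+
    then have "\<bar>r - x\<bar> < D r" "\<bar>r - y\<bar> < D r" by (auto simp: dist_real_def)
    then have "\<bar>x - r\<bar> < D r" "\<bar>y - r\<bar> < D r" by arith+
    then have "\<bar>gam i j x - gam i j r\<bar> < e/2" "\<bar>gam i j y - gam i j r\<bar> < e/2"
      using D(2) r(1) h by auto
    then show "\<bar>gam i j x - gam i j y\<bar> < e" by linarith
  qed (fact eps)
qed

lemma gam_bound: "\<exists>B. \<forall>i j x. j \<in> II i \<longrightarrow> 0 \<le> x \<longrightarrow> x \<le> R \<longrightarrow> gam i j x \<le> B"
proof -
  obtain d where d: "d > 0" "\<And>i j x y. j \<in> II i \<Longrightarrow> 0 \<le> x \<Longrightarrow> 0 \<le> y \<Longrightarrow> x \<le> R \<Longrightarrow> y \<le> R \<Longrightarrow> \<bar>x - y\<bar> < d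
     \<Longrightarrow> \<bar>gam i j x - gam i j y\<bar> < 1"
    using gam_unif[of 1 R] by auto
  have "\<bar>gam i j x\<bar> \<le> R / (d/2) + 1" if "j \<in> II i" "0 \<le> x" "x \<le> R" for i j x
  proof -
    have "gam i j 0 = 0" using gamK[OF that(1)] by (simp add: Kinf_def)
    moreover have "\<bar>gam i j y - gam i j x\<bar> \<le> 1" if "0 \<le> x" "x \<le> y" "y \<le> R" "y - x \<le> d/2" for x y
      using d(2)[of j i y x] that \<open>j \<in> II i\<close> d(1) by fastforce
    ultimately show ?thesis using chain_bound[of "gam i j" "d/2" R] d(1) that by force
  qed
  then show ?thesis by (meson abs_ge_self order_trans)
qed

lemma gam_nonneg: "j \<in> II i \<Longrightarrow> 0 \<le> x \<Longrightarrow> 0 \<le> gam i j x"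
  using gamK Kinf_nonneg by blast

lemma W_pos: assumes "\<And>j. 0 \<le> s j" shows "W i s \<in> linf_pos"
proof (rule linf_posI)
  fix j
  show "0 \<le> W i s j" using assms gam_nonneg by (simp add: W_def)
  have "0 \<le> (\<Sum>k\<in>II i. gam i k (s k))" using assms gam_nonneg by (intro sum_nonneg) auto
  moreover have "j \<in> II i \<Longrightarrow> gam i j (s j) \<le> (\<Sum>k\<in>II i. gam i k (s k))"
    using assms gam_nonneg fin by (intro member_le_sum) auto
  ultimately show "W i s j \<le> (\<Sum>k\<in>II i. gam i k (s k))" by (simp add: W_def)
qed

lemma W_restr: "restr (II i) (W i s) = W i s" by (auto simp: restr_def W_def)

lemma Gam_W: "G s i = real_of_ereal (mu i (W i s))" by (simp add: Gam_def W_def)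

lemma mu_W_fin: "(\<And>j. 0 \<le> s j) \<Longrightarrow> mu i (W i s) \<noteq> \<infinity>"
  by (rule M3[OF fin W_pos]) (auto simp: W_def)

lemma G_nonneg: "(\<And>j. 0 \<le> s j) \<Longrightarrow> 0 \<le> G s i"
  unfolding Gam_W by (rule real_of_ereal_pos) (use mu_nonneg W_pos in blast)

lemma G_mono: assumes "\<And>j. 0 \<le> s j" "\<And>j. s j \<le> t j" shows "G s i \<le> G t i"
proof -
  have t: "\<And>j. 0 \<le> t j" using assms order_trans by blast
  have "mu i (W i s) \<le> mu i (W i t)"
    using assms by (intro M2 W_pos t) (auto simp: W_def intro: Kinf_mono gamK)
  then show ?thesis unfolding Gam_W
    using real_of_ereal_positive_mono mu_nonneg W_pos assms(1) mu_W_fin t by blast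
qed

lemma G_zero: "G (\<lambda>_. 0) i = 0"
proof -
  have "W i (\<lambda>_. 0) = (\<lambda>_. 0)" using gamK by (auto simp: W_def Kinf_def)
  moreover obtain xi where "\<And>i. mu i (\<lambda>_. 0) = 0" using M1 by metis
  ultimately show ?thesis unfolding Gam_W by simp
qed

lemma bnd_nonneg: "bnd R s \<Longrightarrow> 0 \<le> s j" by (simp add: bnd_def)
lemma bnd_le: "bnd R s \<Longrightarrow> s j \<le> R" by (simp add: bnd_def)
lemma bnd_pos: "bnd R s \<Longrightarrow> s \<in> linf_pos" by (auto simp: bnd_def intro: linf_posI)
lemma bnd_R: "bnd R s \<Longrightarrow> 0 \<le> R" using bnd_nonneg bnd_le order_trans by blast
lemma bnd_mono: "bnd R s \<Longrightarrow> R \<le> R' \<Longrightarrow> bnd R' s" using order_trans by (fastforce simp: bnd_def)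
lemma bnd_const: "0 \<le> c \<Longrightarrow> c \<le> R \<Longrightarrow> bnd R (\<lambda>_. c)" by (simp add: bnd_def)

lemma G_unif:
  assumes e: "e > 0"
  shows "\<exists>d>0. \<forall>s t i. bnd R s \<longrightarrow> bnd R t \<longrightarrow> (\<forall>j\<in>II i. \<bar>s j - t j\<bar> \<le> d) \<longrightarrow> \<bar>G s i - G t i\<bar> \<le> e"
proof -
  obtain B0 where B0: "\<And>i j x. j \<in> II i \<Longrightarrow> 0 \<le> x \<Longrightarrow> x \<le> R \<Longrightarrow> gam i j x \<le> B0"
    using gam_bound[of R] by blast
  define B where "B = max B0 0"
  define A where "A = {w :: 'i \<Rightarrow> real. w \<in> linf_pos \<and> linf_norm w \<le> B}"
  obtain d2 where d2: "d2 > 0" "\<And>s0 s i. s0 \<in> A \<Longrightarrow> s \<in> linf_pos \<Longrightarrow> linf_norm (\<lambda>j. s j - s0 j) \<le> d2 \<Longrightarrow>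
     \<bar>real_of_ereal (mu i (restr (II i) s)) - real_of_ereal (mu i (restr (II i) s0))\<bar> \<le> e"
    using M4[of A B e] e unfolding A_def by blast
  obtain d1 where d1: "d1 > 0" "\<And>i j x y. j \<in> II i \<Longrightarrow> 0 \<le> x \<Longrightarrow> 0 \<le> y \<Longrightarrow> x \<le> R \<Longrightarrow> y \<le> R \<Longrightarrow> \<bar>x - y\<bar> < d1
     \<Longrightarrow> \<bar>gam i j x - gam i j y\<bar> < d2"
    using gam_unif[OF d2(1), of R] by blast
  have WA: "W i s \<in> A" if "bnd R s" for i s
  proof -
    have "\<bar>W i s j\<bar> \<le> B" for j
      using B0[of j i "s j"] that gam_nonneg[of j i "s j"]
      by (auto simp: W_def B_def bnd_def)
    then have "linf_norm (W i s) \<le> B" by (rule linf_norm_le)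
    then show ?thesis unfolding A_def using W_pos[of s] that by (auto simp: bnd_def)
  qed
  show ?thesis
  proof (intro exI[of _ "d1/2"] conjI allI impI)
    fix s t i assume s: "bnd R s" and t: "bnd R t" and st: "\<forall>j\<in>II i. \<bar>s j - t j\<bar> \<le> d1/2"
    have "\<bar>W i s j - W i t j\<bar> \<le> d2" for j
    proof (cases "j \<in> II i")
      case True
      then have "\<bar>gam i j (s j) - gam i j (t j)\<bar> < d2"
        using d1 s t st by (intro d1(2)) (auto simp: bnd_def)
      then show ?thesis using True by (simp add: W_def)
    qed (use d2 in \<open>simp add: W_def\<close>)
    then have "linf_norm (\<lambda>j. W i s j - W i t j) \<le> d2" by (rule linf_norm_le)
    then have "\<bar>real_of_ereal (mu i (restr (II i) (W i s))) - real_of_ereal (mu i (restr (II i) (W i t)))\<bar> \<le> e"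
      using d2(2) WA[OF t] WA[OF s] unfolding A_def by blast
    then show "\<bar>G s i - G t i\<bar> \<le> e" by (simp add: W_restr Gam_W)
  qed (use d1 in simp)
qed

lemma G_bound: "\<exists>B. \<forall>s i. bnd R s \<longrightarrow> G s i \<le> B"
proof -
  obtain d where d: "d > 0" "\<And>s t i. bnd R s \<Longrightarrow> bnd R t \<Longrightarrow> (\<forall>j\<in>II i. \<bar>s j - t j\<bar> \<le> d) \<Longrightarrow> \<bar>G s i - G t i\<bar> \<le> 1"
    using G_unif[of 1 R] by auto
  have "G s i \<le> R / d + 1" if s: "bnd R s" for s i
  proof -
    have R: "0 \<le> R" using bnd_R[OF s] .
    have "\<forall>x. 0 \<le> x \<longrightarrow> x \<le> R \<longrightarrow> \<bar>G (\<lambda>_. x) i\<bar> \<le> R / d + 1"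
    proof (rule chain_bound[where f="\<lambda>x. G (\<lambda>_. x) i", OF G_zero d(1)])
      fix x y :: real assume "0 \<le> x" "x \<le> y" "y \<le> R" "y - x \<le> d"
      then show "\<bar>G (\<lambda>_. y) i - G (\<lambda>_. x) i\<bar> \<le> 1"
        by (intro d(2) bnd_const) auto
    qed
    then have "G (\<lambda>_. R) i \<le> R / d + 1" using R by fastforce
    moreover have "G s i \<le> G (\<lambda>_. R) i" using s by (intro G_mono) (auto simp: bnd_def)
    ultimately show ?thesis by simp
  qed
  then show ?thesis by blast
qed

lemma T_app: "T r s i = max r (G s i)" by (simp add: Gplus_def)

definition GB where "GB R = (SOME B. \<forall>s i. bnd R s \<longrightarrow> G s i \<le> B)"

lemma GB: "bnd R s \<Longrightarrow> G s i \<le> GB R"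
  using someI_ex[OF G_bound[of R]] unfolding GB_def by blast

lemma T_bnd: assumes "0 \<le> r" "r \<le> \<rho>" "bnd R s" shows "bnd (max \<rho> (GB R)) (T r s)"
proof -
  have "max r (G s j) \<le> max \<rho> (GB R)" for j using GB[OF assms(3), of j] assms(2) by (rule max.mono[rotated])
  then show ?thesis unfolding bnd_def T_app using assms(1) by (auto simp: le_max_iff_disj)
qed

lemma iter_bnd: "0 \<le> r \<Longrightarrow> bnd R s \<Longrightarrow> \<exists>R'. bnd R' ((T r ^^ N) s)"
proof (induction N)
  case 0 then show ?case by auto
next
  case (Suc N)
  then obtain R' where "bnd R' ((T r ^^ N) s)" by blast
  then show ?case using T_bnd[OF Suc(2) order.refl] by auto
qed

lemma T_nonneg: "(\<And>j. 0 \<le> s j) \<Longrightarrow> 0 \<le> T r s i"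
  unfolding T_app using G_nonneg by (meson max.coboundedI2)

lemma T_ge: "r \<le> T r s i" unfolding T_app by simp

lemma iter_mono: assumes "\<And>j. 0 \<le> s j" "\<And>j. s j \<le> t j"
  shows "\<forall>j. 0 \<le> (T r ^^ N) s j \<and> (T r ^^ N) s j \<le> (T r ^^ N) t j"
proof (induction N)
  case 0 then show ?case using assms by simp
next
  case (Suc N)
  show ?case
  proof
    fix j
    have "0 \<le> T r ((T r ^^ N) s) j" using Suc T_nonneg by blast
    moreover have "G ((T r ^^ N) s) j \<le> G ((T r ^^ N) t) j" using Suc by (intro G_mono) auto
    then have "T r ((T r ^^ N) s) j \<le> T r ((T r ^^ N) t) j" unfolding T_app by simp
    ultimately show "0 \<le> (T r ^^ Suc N) s j \<and> (T r ^^ Suc N) s j \<le> (T r ^^ Suc N) t j" by simp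
  qed
qed

lemma max_diff: "\<bar>max (a::real) b - max c d\<bar> \<le> max \<bar>a - c\<bar> \<bar>b - d\<bar>"
  unfolding max_def by auto

lemma close:
  assumes "e > 0"
  shows "\<exists>d>0. \<forall>r r' s t. 0 \<le> r \<longrightarrow> r \<le> \<rho> \<longrightarrow> 0 \<le> r' \<longrightarrow> r' \<le> \<rho> \<longrightarrow> \<bar>r - r'\<bar> \<le> d \<longrightarrow>
     bnd R s \<longrightarrow> bnd R t \<longrightarrow> (\<forall>j. \<bar>s j - t j\<bar> \<le> d) \<longrightarrow> (\<forall>i. \<bar>(T r ^^ N) s i - (T r' ^^ N) t i\<bar> \<le> e)"
  using assms
proof (induction N arbitrary: R e)
  case 0 then show ?case by (intro exI[of _ e]) auto
next
  case (Suc N)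
  define R' where "R' = max \<rho> (GB R)"
  obtain d1 where d1: "d1 > 0" "\<And>r r' s t i. 0 \<le> r \<Longrightarrow> r \<le> \<rho> \<Longrightarrow> 0 \<le> r' \<Longrightarrow> r' \<le> \<rho> \<Longrightarrow> \<bar>r - r'\<bar> \<le> d1 \<Longrightarrow>
     bnd R' s \<Longrightarrow> bnd R' t \<Longrightarrow> (\<forall>j. \<bar>s j - t j\<bar> \<le> d1) \<Longrightarrow> \<bar>(T r ^^ N) s i - (T r' ^^ N) t i\<bar> \<le> e"
    using Suc.IH[of e R'] Suc.prems by blast
  obtain d2 where d2: "d2 > 0" "\<And>s t i. bnd R s \<Longrightarrow> bnd R t \<Longrightarrow> (\<forall>j\<in>II i. \<bar>s j - t j\<bar> \<le> d2) \<Longrightarrow> \<bar>G s i - G t i\<bar> \<le> d1"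
    using G_unif[OF d1(1), of R] by blast
  show ?case
  proof (intro exI[of _ "min d1 d2"] conjI allI impI)
    fix r r' s t i
    assume h: "0 \<le> r" "r \<le> \<rho>" "0 \<le> r'" "r' \<le> \<rho>" "\<bar>r - r'\<bar> \<le> min d1 d2" "bnd R s" "bnd R t"
      "\<forall>j. \<bar>s j - t j\<bar> \<le> min d1 d2"
    have b1: "bnd R' (T r s)" "bnd R' (T r' t)" unfolding R'_def using T_bnd h by auto
    have "\<bar>T r s j - T r' t j\<bar> \<le> d1" for j
    proof -
      have "\<bar>G s j - G t j\<bar> \<le> d1" using h by (intro d2(2)) auto
      then show ?thesis unfolding T_app using max_diff[of r "G s j" r' "G t j"] h(5) by linarith
    qed
    then have "\<bar>(T r ^^ N) (T r s) i - (T r' ^^ N) (T r' t) i\<bar> \<le> e"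
      using h b1 by (intro d1(2)) auto
    then show "\<bar>(T r ^^ Suc N) s i - (T r' ^^ Suc N) t i\<bar> \<le> e"
      by (simp only: funpow_Suc_right o_apply)
  qed (use d1 d2 in simp)
qed

lemma G_lim:
  assumes x: "\<And>n. bnd R (x n)" and y: "bnd R y" and lim: "\<And>j. (\<lambda>n. x n j) \<longlonglongrightarrow> y j"
  shows "(\<lambda>n. G (x n) i) \<longlonglongrightarrow> G y i"
proof (rule tendstoI)
  fix e :: real assume e: "e > 0"
  obtain d where d: "d > 0" "\<And>s t i. bnd R s \<Longrightarrow> bnd R t \<Longrightarrow> (\<forall>j\<in>II i. \<bar>s j - t j\<bar> \<le> d) \<Longrightarrow> \<bar>G s i - G t i\<bar> \<le> e/2"
    using G_unif[of "e/2" R] e by auto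
  have "\<forall>j\<in>II i. eventually (\<lambda>n. dist (x n j) (y j) < d) sequentially"
    using lim d(1) tendstoD by blast
  then have "eventually (\<lambda>n. \<forall>j\<in>II i. dist (x n j) (y j) < d) sequentially"
    by (rule eventually_ball_finite[OF fin])
  then show "eventually (\<lambda>n. dist (G (x n) i) (G y i) < e) sequentially"
  proof (rule eventually_mono)
    fix n assume "\<forall>j\<in>II i. dist (x n j) (y j) < d"
    then have "\<bar>G (x n) i - G y i\<bar> \<le> e/2" using x y by (intro d(2)) (auto simp: dist_real_def)
    then show "dist (G (x n) i) (G y i) < e" using e by (simp add: dist_real_def)
  qed
qed

definition ph where "ph = (SOME phi. Kinf phi \<and>
     (\<forall>s\<in>linf_pos. \<forall>b\<in>linf_pos. (\<forall>i. s i \<le> max (b i) (G s i)) \<longrightarrow> linf_norm s \<le> phi (linf_norm b)))"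

lemma ph: "Kinf ph" "\<And>s b. s \<in> linf_pos \<Longrightarrow> b \<in> linf_pos \<Longrightarrow> (\<forall>i. s i \<le> max (b i) (G s i)) \<Longrightarrow> linf_norm s \<le> ph (linf_norm b)"
  using someI_ex[OF mbi[unfolded MBI_oplus_def]] unfolding ph_def by blast+

definition u where "u r n = (T r ^^ n) (\<lambda>_. r)"

lemma u_0: "u r 0 = (\<lambda>_. r)" by (simp add: u_def)
lemma u_Suc: "u r (Suc n) = T r (u r n)" by (simp add: u_def)

lemma u_bnd: "0 \<le> r \<Longrightarrow> \<exists>R. bnd R (u r n)"
  unfolding u_def by (rule iter_bnd) (auto intro: bnd_const)

lemma u_ge: "r \<le> u r n j"
  by (cases n) (auto simp: u_0 u_Suc T_ge)

lemma u_inc: assumes r: "0 \<le> r" shows "u r n j \<le> u r (Suc n) j"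
proof (induction n arbitrary: j)
  case 0 then show ?case by (simp add: u_0 u_Suc T_ge)
next
  case (Suc n)
  have "G (u r n) j \<le> G (u r (Suc n)) j"
    using Suc r u_ge order_trans by (intro G_mono) blast+
  then show ?case by (simp only: u_Suc[of r "Suc n"] u_Suc[of r n] T_app)
qed

lemma Ghat_eq: assumes r: "0 \<le> r" shows "(Ghat II gam mu ^^ n) (\<lambda>_. r) = u r n"
proof (induction n)
  case 0 then show ?case by (simp add: u_0)
next
  case (Suc n)
  have "max (u r n j) (G (u r n) j) = max r (G (u r n) j)" for j
    using u_inc[OF r, of n j] u_ge[of r n j] unfolding u_Suc T_app by linarith
  then show ?case using Suc by (simp add: Ghat_def u_Suc T_app)
qed

lemma u_le_ph: assumes r: "0 \<le> r" shows "u r n j \<le> ph r"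
proof -
  obtain R where R: "bnd R (u r n)" using u_bnd[OF r] by blast
  have "linf_norm (u r n) \<le> ph (linf_norm (\<lambda>_::'i. r))"
  proof (rule ph(2))
    show "u r n \<in> linf_pos" using bnd_pos[OF R] .
    show "(\<lambda>_::'i. r) \<in> linf_pos" using r by (intro linf_posI) auto
    show "\<forall>i. u r n i \<le> max r (G (u r n) i)" using u_inc[OF r] by (simp add: u_Suc T_app)
  qed
  then show ?thesis using linf_pos_ge[OF bnd_pos[OF R], of j] r by (simp add: linf_norm_const)
qed

lemma sig_eq: "0 \<le> r \<Longrightarrow> sig r j = (SUP n. u r n j)"
  by (simp add: sigma_star_def Ghat_eq)

lemma u_bdd: "0 \<le> r \<Longrightarrow> bdd_above (range (\<lambda>n. u r n j))"
  using u_le_ph by (intro bdd_aboveI[where M="ph r"]) auto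

lemma sig_lim: assumes r: "0 \<le> r" shows "(\<lambda>n. u r n j) \<longlonglongrightarrow> sig r j"
  unfolding sig_eq[OF r] by (rule LIMSEQ_incseq_SUP[OF u_bdd[OF r]]) (intro incseq_SucI u_inc[OF r])

lemma u_le_sig: "0 \<le> r \<Longrightarrow> u r n j \<le> sig r j"
  unfolding sig_eq by (rule cSUP_upper[OF _ u_bdd]) auto

lemma sig_bnd: assumes r: "0 \<le> r" shows "bnd (ph r) (sig r)"
  unfolding bnd_def
proof
  fix j
  have "r \<le> sig r j" using u_le_sig[OF r, of 0 j] by (simp add: u_0)
  moreover have "sig r j \<le> ph r" unfolding sig_eq[OF r] by (rule cSUP_least) (auto intro: u_le_ph[OF r])
  ultimately show "0 \<le> sig r j \<and> sig r j \<le> ph r" using r by simp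
qed

lemma sig_fix: assumes r: "0 \<le> r" shows "T r (sig r) = sig r"
proof
  fix j
  have "bnd (ph r) (u r n)" for n using u_ge[of r n] u_le_ph[OF r, of n] r unfolding bnd_def by (meson order_trans)
  then have "(\<lambda>n. G (u r n) j) \<longlonglongrightarrow> G (sig r) j" using sig_bnd[OF r] sig_lim[OF r] by (rule G_lim)
  then have "(\<lambda>n. u r (Suc n) j) \<longlonglongrightarrow> T r (sig r) j" unfolding u_Suc T_app by (intro tendsto_max tendsto_const)
  moreover have "(\<lambda>n. u r (Suc n) j) \<longlonglongrightarrow> sig r j" using sig_lim[OF r] by (rule LIMSEQ_Suc)
  ultimately show "T r (sig r) j = sig r j" by (rule LIMSEQ_unique)
qed

lemma sig_min: assumes r: "0 \<le> r" and s: "\<And>j. 0 \<le> s j" and Ts: "\<And>j. T r s j \<le> s j"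
  shows "sig r j \<le> s j"
proof -
  have "u r n j \<le> s j" for n j
  proof (induction n arbitrary: j)
    case 0 then show ?case using T_ge[of r s j] Ts[of j] by (simp add: u_0)
  next
    case (Suc n)
    have "G (u r n) j \<le> G s j" using Suc r u_ge order_trans by (intro G_mono) blast+
    then have "u r (Suc n) j \<le> T r s j" unfolding u_Suc T_app by simp
    then show ?case using Ts[of j] by simp
  qed
  then show ?thesis unfolding sig_eq[OF r] by (intro cSUP_least) auto
qed

lemma sig_mono: assumes "0 \<le> r" "r \<le> r'" shows "sig r j \<le> sig r' j"
proof (rule sig_min[OF assms(1)])
  have r': "0 \<le> r'" using assms by simp
  show "0 \<le> sig r' j" for j using sig_bnd[OF r'] by (simp add: bnd_def)
  show "T r (sig r') j \<le> sig r' j" for j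
    using sig_fix[OF r'] assms(2) unfolding T_app by (metis max.mono order.refl)
qed

lemma sig_iter: assumes "0 \<le> r" shows "(T r ^^ N) (sig r) = sig r"
  by (induction N) (simp_all add: sig_fix[OF assms])

lemma sig_pos: "0 \<le> r \<Longrightarrow> sig r \<in> linf_pos" using bnd_pos[OF sig_bnd] .

lemma get_N:
  assumes attr: "\<forall>r\<ge>0. \<forall>s\<in>linf_pos. (\<lambda>n. linf_norm (\<lambda>i. (T r ^^ n) s i - sig r i)) \<longlonglongrightarrow> 0"
    and r: "0 \<le> r" and s: "bnd R s" and e: "e > 0"
  shows "\<exists>N. \<forall>i. \<bar>(T r ^^ N) s i - sig r i\<bar> < e"
proof -
  have "(\<lambda>n. linf_norm (\<lambda>i. (T r ^^ n) s i - sig r i)) \<longlonglongrightarrow> 0" using attr r bnd_pos[OF s] by blast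
  from LIMSEQ_D[OF this e] obtain N where N: "\<bar>linf_norm (\<lambda>i. (T r ^^ N) s i - sig r i)\<bar> < e" by auto
  obtain R' where R': "bnd R' ((T r ^^ N) s)" using iter_bnd[OF r s] by blast
  have "\<bar>(T r ^^ N) s i - sig r i\<bar> < e" for i
    using linf_norm_diff[OF bnd_pos[OF R'] sig_pos[OF r], of i] N by linarith
  then show ?thesis by blast
qed

lemma attr_left:
  assumes attr: "\<forall>r\<ge>0. \<forall>s\<in>linf_pos. (\<lambda>n. linf_norm (\<lambda>i. (T r ^^ n) s i - sig r i)) \<longlonglongrightarrow> 0"
    and r0: "0 < r0" and e: "e > 0"
  shows "\<exists>d>0. \<forall>r. 0 \<le> r \<longrightarrow> r0 - d < r \<longrightarrow> r \<le> r0 \<longrightarrow> (\<forall>i. \<bar>sig r i - sig r0 i\<bar> \<le> e)"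
proof -
  define r1 where "r1 = r0 / 2"
  have r1: "0 \<le> r1" "r1 \<le> r0" using r0 by (auto simp: r1_def)
  have e2: "e/2 > 0" using e by simp
  have r0': "0 \<le> r0" using r0 by simp
  obtain N where N: "\<forall>i. \<bar>(T r0 ^^ N) (sig r1) i - sig r0 i\<bar> < e/2"
    using get_N[OF attr r0' sig_bnd[OF r1(1)] e2] by (elim exE)
  obtain d where d: "d > 0" "\<forall>r r' s t. 0 \<le> r \<longrightarrow> r \<le> r0 \<longrightarrow> 0 \<le> r' \<longrightarrow> r' \<le> r0 \<longrightarrow> \<bar>r - r'\<bar> \<le> d \<longrightarrow>
     bnd (ph r1) s \<longrightarrow> bnd (ph r1) t \<longrightarrow> (\<forall>j. \<bar>s j - t j\<bar> \<le> d) \<longrightarrow> (\<forall>i. \<bar>(T r ^^ N) s i - (T r' ^^ N) t i\<bar> \<le> e/2)"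
    using close[OF e2, of r0 "ph r1" N] by (elim exE conjE)
  show ?thesis
  proof (intro exI[of _ "min d (r0 - r1)"] conjI allI impI)
    show "0 < min d (r0 - r1)" using d r0 by (simp add: r1_def)
    fix r i assume h: "0 \<le> r" "r0 - min d (r0 - r1) < r" "r \<le> r0"
    have rr1: "r1 \<le> r" using h by linarith
    have a: "sig r i = (T r ^^ N) (sig r) i" using sig_iter[OF h(1)] by simp
    have b: "(T r ^^ N) (sig r1) i \<le> (T r ^^ N) (sig r) i"
      using iter_mono[where s="sig r1" and t="sig r" and r=r and N=N] sig_bnd[OF r1(1)] sig_mono[OF r1(1) rr1] by (auto simp: bnd_def)
    have c: "\<bar>(T r ^^ N) (sig r1) i - (T r0 ^^ N) (sig r1) i\<bar> \<le> e/2"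
    proof (rule d(2)[rule_format])
      show "\<bar>r - r0\<bar> \<le> d" using h by linarith
    qed (use h r0 sig_bnd[OF r1(1)] in auto)
    have "sig r i \<le> sig r0 i" using sig_mono[OF h(1) h(3)] .
    then show "\<bar>sig r i - sig r0 i\<bar> \<le> e" using a b c spec[OF N, of i] by linarith
  qed
qed

lemma attr_right:
  assumes attr: "\<forall>r\<ge>0. \<forall>s\<in>linf_pos. (\<lambda>n. linf_norm (\<lambda>i. (T r ^^ n) s i - sig r i)) \<longlonglongrightarrow> 0"
    and r0: "0 \<le> r0" and e: "e > 0"
  shows "\<exists>d>0. \<forall>r. r0 \<le> r \<longrightarrow> r < r0 + d \<longrightarrow> (\<forall>i. \<bar>sig r i - sig r0 i\<bar> \<le> e)"
proof -
  define r2 where "r2 = r0 + 1"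
  have r2: "0 \<le> r2" "r0 \<le> r2" using r0 by (auto simp: r2_def)
  have e2: "e/2 > 0" using e by simp
  obtain N where N: "\<forall>i. \<bar>(T r0 ^^ N) (sig r2) i - sig r0 i\<bar> < e/2"
    using get_N[OF attr r0 sig_bnd[OF r2(1)] e2] by (elim exE)
  obtain d where d: "d > 0" "\<forall>r r' s t. 0 \<le> r \<longrightarrow> r \<le> r2 \<longrightarrow> 0 \<le> r' \<longrightarrow> r' \<le> r2 \<longrightarrow> \<bar>r - r'\<bar> \<le> d \<longrightarrow>
     bnd (ph r2) s \<longrightarrow> bnd (ph r2) t \<longrightarrow> (\<forall>j. \<bar>s j - t j\<bar> \<le> d) \<longrightarrow> (\<forall>i. \<bar>(T r ^^ N) s i - (T r' ^^ N) t i\<bar> \<le> e/2)"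
    using close[OF e2, of r2 "ph r2" N] by (elim exE conjE)
  show ?thesis
  proof (intro exI[of _ "min d 1"] conjI allI impI)
    show "0 < min d 1" using d by simp
    fix r i assume h: "r0 \<le> r" "r < r0 + min d 1"
    have rr: "0 \<le> r" "r \<le> r2" using h r0 by (auto simp: r2_def)
    have a: "sig r i = (T r ^^ N) (sig r) i" using sig_iter[OF rr(1)] by simp
    have b: "(T r ^^ N) (sig r) i \<le> (T r ^^ N) (sig r2) i"
      using iter_mono[where s="sig r" and t="sig r2" and r=r and N=N] sig_bnd[OF rr(1)] sig_mono[OF rr] by (auto simp: bnd_def)
    have c: "\<bar>(T r ^^ N) (sig r2) i - (T r0 ^^ N) (sig r2) i\<bar> \<le> e/2"
    proof (rule d(2)[rule_format])
      show "\<bar>r - r0\<bar> \<le> d" using h by linarith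
    qed (use h rr r0 r2 sig_bnd[OF r2(1)] in auto)
    have "sig r0 i \<le> sig r i" using sig_mono[OF r0 h(1)] .
    then show "\<bar>sig r i - sig r0 i\<bar> \<le> e" using a b c spec[OF N, of i] by linarith
  qed
qed

lemma part_b:
  assumes attr: "\<forall>r\<ge>0. \<forall>s\<in>linf_pos. (\<lambda>n. linf_norm (\<lambda>i. (T r ^^ n) s i - sig r i)) \<longlonglongrightarrow> 0"
  shows "\<forall>r0\<ge>0. \<forall>e>0. \<exists>d>0. \<forall>r\<ge>0. \<bar>r - r0\<bar> < d \<longrightarrow>
                 linf_norm (\<lambda>i. sig r i - sig r0 i) < e"
proof (intro allI impI)
  fix r0 e :: real assume r0: "0 \<le> r0" and e: "0 < e"
  obtain dR where dR: "dR > 0" "\<And>r i. r0 \<le> r \<Longrightarrow> r < r0 + dR \<Longrightarrow> \<bar>sig r i - sig r0 i\<bar> \<le> e/2"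
    using attr_right[OF attr r0, of "e/2"] e by auto
  show "\<exists>d>0. \<forall>r\<ge>0. \<bar>r - r0\<bar> < d \<longrightarrow> linf_norm (\<lambda>i. sig r i - sig r0 i) < e"
  proof (cases "r0 = 0")
    case True
    show ?thesis
    proof (intro exI[of _ dR] conjI allI impI)
      fix r :: real assume "0 \<le> r" "\<bar>r - r0\<bar> < dR"
      then have "\<bar>sig r i - sig r0 i\<bar> \<le> e/2" for i using True by (intro dR(2)) auto
      then have "linf_norm (\<lambda>i. sig r i - sig r0 i) \<le> e/2" by (rule linf_norm_le)
      then show "linf_norm (\<lambda>i. sig r i - sig r0 i) < e" using e by linarith
    qed (fact dR)
  next
    case False
    then have r0': "0 < r0" using r0 by simp
    obtain dL where dL: "dL > 0" "\<And>r i. 0 \<le> r \<Longrightarrow> r0 - dL < r \<Longrightarrow> r \<le> r0 \<Longrightarrow> \<bar>sig r i - sig r0 i\<bar> \<le> e/2"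
      using attr_left[OF attr r0', of "e/2"] e by auto
    show ?thesis
    proof (intro exI[of _ "min dL dR"] conjI allI impI)
      fix r :: real assume h: "0 \<le> r" "\<bar>r - r0\<bar> < min dL dR"
      have "\<bar>sig r i - sig r0 i\<bar> \<le> e/2" for i
      proof (cases "r \<le> r0")
        case True then show ?thesis using h by (intro dL(2)) auto
      next
        case False then show ?thesis using h by (intro dR(2)) auto
      qed
      then have "linf_norm (\<lambda>i. sig r i - sig r0 i) \<le> e/2" by (rule linf_norm_le)
      then show "linf_norm (\<lambda>i. sig r i - sig r0 i) < e" using e by linarith
    qed (use dL dR in simp)
  qed
qed

lemma left_a:
  assumes r0: "0 \<le> r0" and e: "e > 0"
  shows "\<exists>d>0. \<forall>r. 0 \<le> r \<longrightarrow> r0 - d < r \<longrightarrow> r \<le> r0 \<longrightarrow> sig r0 i - sig r i \<le> e"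
proof -
  have e2: "e/2 > 0" using e by simp
  obtain N where N: "\<forall>n\<ge>N. norm (u r0 n i - sig r0 i) < e/2"
    using LIMSEQ_D[OF sig_lim[OF r0, of i] e2] by (elim exE)
  then have N': "\<bar>u r0 N i - sig r0 i\<bar> < e/2" by simp
  obtain d where d: "d > 0" "\<forall>r r' s t. 0 \<le> r \<longrightarrow> r \<le> r0 \<longrightarrow> 0 \<le> r' \<longrightarrow> r' \<le> r0 \<longrightarrow> \<bar>r - r'\<bar> \<le> d \<longrightarrow>
     bnd r0 s \<longrightarrow> bnd r0 t \<longrightarrow> (\<forall>j. \<bar>s j - t j\<bar> \<le> d) \<longrightarrow> (\<forall>i. \<bar>(T r ^^ N) s i - (T r' ^^ N) t i\<bar> \<le> e/2)"
    using close[OF e2, of r0 r0 N] by (elim exE conjE)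
  show ?thesis
  proof (intro exI[of _ d] conjI allI impI)
    fix r assume h: "0 \<le> r" "r0 - d < r" "r \<le> r0"
    have c: "\<bar>u r N i - u r0 N i\<bar> \<le> e/2" unfolding u_def
    proof (rule d(2)[rule_format])
      show "\<bar>r - r0\<bar> \<le> d" using h by linarith
      show "\<bar>r - r0\<bar> \<le> d" for j::'i using h by linarith
    qed (use h r0 in \<open>auto intro: bnd_const\<close>)
    have "u r N i \<le> sig r i" using u_le_sig[OF h(1)] .
    then show "sig r0 i - sig r i \<le> e" using c N' by linarith
  qed (fact d)
qed

lemma right_a:
  assumes U: "\<forall>r\<ge>0. \<forall>s\<in>linf_pos. s = T r s \<longrightarrow> s = sig r"
    and r0: "0 \<le> r0" and e: "e > 0"
  shows "\<exists>d>0. \<forall>r. r0 \<le> r \<longrightarrow> r < r0 + d \<longrightarrow> sig r i - sig r0 i \<le> e"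
proof -
  define rn where "rn n = r0 + inverse (real (Suc n))" for n
  define x where "x n = sig (rn n)" for n
  have rn0: "0 \<le> rn n" "r0 \<le> rn n" "rn n \<le> r0 + 1" for n using r0 by (auto simp: rn_def field_simps)
  have rn_dec: "rn (Suc n) \<le> rn n" for n unfolding rn_def by (simp add: field_simps)
  have rn_lim: "rn \<longlonglongrightarrow> r0" unfolding rn_def using tendsto_add[OF tendsto_const LIMSEQ_inverse_real_of_nat, of r0] by simp
  have xdec: "x (Suc n) j \<le> x n j" for n j unfolding x_def using sig_mono[OF rn0(1) rn_dec] .
  have xlow: "sig r0 j \<le> x n j" for n j unfolding x_def using sig_mono[OF r0 rn0(2)] .
  have phm: "ph (rn n) \<le> ph (r0 + 1)" for n using Kinf_mono[OF ph(1) rn0(1) rn0(3)] .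
  have xb: "bnd (ph (r0 + 1)) (x n)" for n unfolding x_def using bnd_mono[OF sig_bnd[OF rn0(1)] phm] .
  define y where "y j = (INF n. x n j)" for j
  have ylim: "(\<lambda>n. x n j) \<longlonglongrightarrow> y j" for j
  proof -
    have "bdd_below (range (\<lambda>n. x n j))" using xlow by (intro bdd_belowI[where m="sig r0 j"]) auto
    moreover have "decseq (\<lambda>n. x n j)" using xdec by (intro decseq_SucI) auto
    ultimately show ?thesis unfolding y_def by (rule LIMSEQ_decseq_INF)
  qed
  have "sig r0 j \<le> y j" for j unfolding y_def by (rule cINF_greatest) (auto intro: xlow)
  moreover have "y j \<le> x 0 j" for j unfolding y_def
    by (rule cINF_lower) (use xlow in \<open>auto intro: bdd_belowI[where m="sig r0 j"]\<close>)
  ultimately have yb: "bnd (ph (r0 + 1)) y" using xb sig_bnd[OF r0] unfolding bnd_def by (meson order_trans)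
  have yfix: "y = T r0 y"
  proof
    fix j
    have "(\<lambda>n. G (x n) j) \<longlonglongrightarrow> G y j" by (rule G_lim[OF xb yb ylim])
    then have "(\<lambda>n. max (rn n) (G (x n) j)) \<longlonglongrightarrow> T r0 y j" unfolding T_app by (intro tendsto_max rn_lim)
    moreover have "max (rn n) (G (x n) j) = x n j" for n
      using sig_fix[OF rn0(1), of n] unfolding x_def T_app by metis
    ultimately have "(\<lambda>n. x n j) \<longlonglongrightarrow> T r0 y j" by simp
    then show "y j = T r0 y j" using ylim LIMSEQ_unique by blast
  qed
  have "y = sig r0" using U r0 bnd_pos[OF yb] yfix by blast
  then have "(\<lambda>n. x n i) \<longlonglongrightarrow> sig r0 i" using ylim by simp
  from LIMSEQ_D[OF this e] obtain N where N: "\<forall>n\<ge>N. norm (x n i - sig r0 i) < e" by blast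
  show ?thesis
  proof (intro exI[of _ "inverse (real (Suc N))"] conjI allI impI)
    show "0 < inverse (real (Suc N))" by simp
    fix r assume h: "r0 \<le> r" "r < r0 + inverse (real (Suc N))"
    have "sig r i \<le> x N i" unfolding x_def using h r0 by (intro sig_mono) (auto simp: rn_def)
    then show "sig r i - sig r0 i \<le> e" using N by auto
  qed
qed

lemma part_a:
  assumes U: "\<forall>r\<ge>0. \<forall>s\<in>linf_pos. s = T r s \<longrightarrow> s = sig r"
  shows "(\<forall>i. continuous_on {0..} (\<lambda>r. sig r i))
            \<and> (\<forall>rs r. (\<forall>n. rs n \<ge> 0) \<longrightarrow> r \<ge> 0 \<longrightarrow> rs \<longlonglongrightarrow> r \<longrightarrow>
                 (\<exists>C. \<forall>n. linf_norm (sig (rs n)) \<le> C)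
               \<and> (\<forall>i. (\<lambda>n. sig (rs n) i) \<longlonglongrightarrow> sig r i))"
proof -
  have cont: "continuous_on {0..} (\<lambda>r. sig r i)" for i
    unfolding continuous_on_iff
  proof (intro ballI allI impI)
    fix r0 e :: real assume r0: "r0 \<in> {0..}" and e: "0 < e"
    have r0': "0 \<le> r0" using r0 by simp
    obtain dL where dL: "dL > 0" "\<forall>r. 0 \<le> r \<longrightarrow> r0 - dL < r \<longrightarrow> r \<le> r0 \<longrightarrow> sig r0 i - sig r i \<le> e/2"
      using left_a[OF r0', of "e/2" i] e by auto
    obtain dR where dR: "dR > 0" "\<forall>r. r0 \<le> r \<longrightarrow> r < r0 + dR \<longrightarrow> sig r i - sig r0 i \<le> e/2"
      using right_a[OF U r0', of "e/2" i] e by auto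
    show "\<exists>d>0. \<forall>r\<in>{0..}. dist r r0 < d \<longrightarrow> dist (sig r i) (sig r0 i) < e"
    proof (intro exI[of _ "min dL dR"] conjI ballI impI)
      fix r :: real assume r: "r \<in> {0..}" and h: "dist r r0 < min dL dR"
      have r': "0 \<le> r" using r by simp
      show "dist (sig r i) (sig r0 i) < e"
      proof (cases "r \<le> r0")
        case True
        have "sig r i \<le> sig r0 i" using sig_mono[OF r' True] .
        moreover have "sig r0 i - sig r i \<le> e/2" using dR dL(2) r' True h by (auto simp: dist_real_def)
        ultimately show ?thesis using e by (simp add: dist_real_def)
      next
        case False
        have "sig r0 i \<le> sig r i" using sig_mono[OF r0'] False by simp
        moreover have "sig r i - sig r0 i \<le> e/2" using dR(2) False h by (auto simp: dist_real_def)
        ultimately show ?thesis using e by (simp add: dist_real_def)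
      qed
    qed (use dL dR in simp)
  qed
  show ?thesis
  proof (intro conjI allI impI)
    show "continuous_on {0..} (\<lambda>r. sig r i)" for i by (rule cont)
    fix rs :: "nat \<Rightarrow> real" and r :: real
    assume rs: "\<forall>n. rs n \<ge> 0" and r: "r \<ge> 0" and lim: "rs \<longlonglongrightarrow> r"
    obtain K where K: "\<forall>n. norm (rs n) \<le> K" using convergent_imp_Bseq[OF convergentI[OF lim]] BseqE by metis
    have "linf_norm (sig (rs n)) \<le> ph K" for n
    proof (rule linf_norm_le)
      fix j
      have "rs n \<le> K" using K[rule_format, of n] rs by simp
      then have "ph (rs n) \<le> ph K" using Kinf_mono[OF ph(1)] rs by blast
      moreover have "0 \<le> sig (rs n) j" "sig (rs n) j \<le> ph (rs n)" using sig_bnd[of "rs n"] rs unfolding bnd_def by auto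
      ultimately show "\<bar>sig (rs n) j\<bar> \<le> ph K" by simp
    qed
    then show "\<exists>C. \<forall>n. linf_norm (sig (rs n)) \<le> C" by blast
    show "(\<lambda>n. sig (rs n) i) \<longlonglongrightarrow> sig r i" for i
      using continuous_on_tendsto_compose[OF cont lim, of i] r rs by (simp add: o_def)
  qed
qed

end

theorem proposition3p10:
  fixes II :: "'i::countable \<Rightarrow> 'i set"
    and gam :: "'i \<Rightarrow> 'i \<Rightarrow> real \<Rightarrow> real"
    and mu :: "'i \<Rightarrow> ('i \<Rightarrow> real) \<Rightarrow> ereal"
  assumes "gain_operator II gam mu"
    and "MBI_oplus II gam mu"
  shows "((\<forall>r\<ge>0. \<forall>s\<in>linf_pos. s = Gplus II gam mu (\<lambda>_. r) s \<longrightarrow> s = sigma_star II gam mu r)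
          \<longrightarrow> (\<forall>i. continuous_on {0..} (\<lambda>r. sigma_star II gam mu r i))
            \<and> (\<forall>rs r. (\<forall>n. rs n \<ge> 0) \<longrightarrow> r \<ge> 0 \<longrightarrow> rs \<longlonglongrightarrow> r \<longrightarrow>
                 (\<exists>C. \<forall>n. linf_norm (sigma_star II gam mu (rs n)) \<le> C)
               \<and> (\<forall>i. (\<lambda>n. sigma_star II gam mu (rs n) i) \<longlonglongrightarrow> sigma_star II gam mu r i)))
       \<and> ((\<forall>r\<ge>0. \<forall>s\<in>linf_pos.
             (\<lambda>n. linf_norm (\<lambda>i. ((Gplus II gam mu (\<lambda>_. r)) ^^ n) s i - sigma_star II gam mu r i))
               \<longlonglongrightarrow> 0)
          \<longrightarrow> (\<forall>r0\<ge>0. \<forall>e>0. \<exists>d>0. \<forall>r\<ge>0. \<bar>r - r0\<bar> < d \<longrightarrow>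
                 linf_norm (\<lambda>i. sigma_star II gam mu r i - sigma_star II gam mu r0 i) < e))"
proof -
  interpret GO II gam mu using assms by unfold_locales
  show ?thesis using part_a part_b by blast
qed

end
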